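(* Let $\mu>1/2$, $0<\nu<1/2$. (1) For every $g\in X$ and all $x\in\mathbb{R}$, $$|h^{-1}(x)|\le \tfrac1\nu |x|^\nu(x^2+1)^{\frac12(\mu-\nu)}e^{\|g\|_\infty},$$ $$|h^{-1}(x)|\ge e^{-(\mu-1)}|x|^\nu(x^2+1)^{\frac12(\mu-\nu)}e^{\fint_0^x g}\ge e^{-(\mu-1)}|x|^\nu(x^2+1)^{\frac12(\mu-\nu)}e^{-\|g\|_\infty}.$$ (2) For every $g\in X_1$ and all $x\in\mathbb{R}\setminus\{0\}$, $$e^{1-\nu-6(\mu-\nu)}|x|^{\nu-1}(x^2+1)^{\frac12(\mu-\nu)}e^{g(x)}\le \frac{h^{-1}(x)}{x}\le \tfrac1\nu |x|^{\nu-1}(x^2+1)^{\frac12(\mu-\nu)}e^{g(x)}.$$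
   Context: $X=\{g\in C(\mathbb{R})\cap L^\infty(\mathbb{R}) \text{ real}:\ \lim_{x\to\pm\infty}g(x)=0\}$ with norm $\|g\|_\infty$. For $g\in X$ let $G(x)=g(x)+\frac12(\mu-\nu)\ln(x^2+1)$, and $X_1=\{g\in X: G\text{ is even and }0\le G(x)-G(y)\le(\mu-\nu)(\ln\frac xy+2)\text{ for all }0\le y\le x\}$ (the upper bound being vacuous when $y=0$). For $g\in X$, $h^{-1}:\mathbb{R}\to\mathbb{R}$ is defined by $h^{-1}(0)=0$, $(h^{-1})'(x)=|x|^{\nu-1}(x^2+1)^{(\mu-\nu)/2}e^{g(x)}$ ($x\ne0$). For an interval $I$, $\fint_I g=\frac1{|I|}\int_I g$, and $\fint_0^x g$ denotes the average of $g$ over the interval with endpoints $0$ and $x$. *)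

theory Defs
  imports "HOL-Analysis.Analysis"
begin

definition spaceX :: "(real \<Rightarrow> real) set" where
  "spaceX = {g. continuous_on UNIV g \<and> bounded (range g) \<and>
                (g \<longlongrightarrow> 0) at_top \<and> (g \<longlongrightarrow> 0) at_bot}"

definition supnorm :: "(real \<Rightarrow> real) \<Rightarrow> real" where
  "supnorm g = (SUP x. \<bar>g x\<bar>)"

definition bigG :: "real \<Rightarrow> real \<Rightarrow> (real \<Rightarrow> real) \<Rightarrow> real \<Rightarrow> real" where
  "bigG \<mu> \<nu> g x = g x + (1/2) * (\<mu> - \<nu>) * ln (x\<^sup>2 + 1)"

definition spaceX1 :: "real \<Rightarrow> real \<Rightarrow> (real \<Rightarrow> real) set" where
  "spaceX1 \<mu> \<nu> = {g \<in> spaceX.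
     (\<forall>x. bigG \<mu> \<nu> g (-x) = bigG \<mu> \<nu> g x) \<and>
     (\<forall>x y. 0 \<le> y \<and> y \<le> x \<longrightarrow> 0 \<le> bigG \<mu> \<nu> g x - bigG \<mu> \<nu> g y) \<and>
     (\<forall>x y. 0 < y \<and> y \<le> x \<longrightarrow>
        bigG \<mu> \<nu> g x - bigG \<mu> \<nu> g y \<le> (\<mu> - \<nu>) * (ln (x / y) + 2))}"

text \<open>h^{-1}: h^{-1}(0)=0 with derivative |x|^(nu-1)(x^2+1)^((mu-nu)/2) e^(g x) off 0,
  i.e. the oriented integral from 0 to x of that density.\<close>
definition hinv :: "real \<Rightarrow> real \<Rightarrow> (real \<Rightarrow> real) \<Rightarrow> real \<Rightarrow> real" where
  "hinv \<mu> \<nu> g x = (LBINT t=ereal 0..ereal x.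
      \<bar>t\<bar> powr (\<nu> - 1) * (t\<^sup>2 + 1) powr ((\<mu> - \<nu>) / 2) * exp (g t))"

definition avg0 :: "(real \<Rightarrow> real) \<Rightarrow> real \<Rightarrow> real" where
  "avg0 g x = (if x = 0 then g 0 else (LBINT t=ereal 0..ereal x. g t) / x)"

end

theory Submission
  imports Defs "HOL-Real_Asymp.Real_Asymp"
begin


lemma powr_int:
  fixes a X :: real assumes a: "a>0" and X: "X>0"
  shows "set_integrable lborel {0<..<X} (\<lambda>t. t powr (a-1))"
    and "(LBINT t=ereal 0..ereal X. t powr (a-1)) = X powr a / a"
proof -
  let ?F = "\<lambda>t::real. t powr a / a"
  have D: "DERIV ?F x :> x powr (a-1)" if "ereal 0 < ereal x" "ereal x < ereal X" for x
  proof -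
    have "x > 0" using that by simp
    then have "((\<lambda>z. z powr a) has_real_derivative a * x powr (a - 1)) (at x)"
      by (rule has_real_derivative_powr)
    then have "DERIV ?F x :> a * x powr (a - 1) / a" by (rule DERIV_cdivide)
    then show ?thesis using a by simp
  qed
  have C: "isCont (\<lambda>t. t powr (a-1)) x" if "ereal 0 < ereal x" "ereal x < ereal X" for x
    using that by (auto intro!: continuous_intros)
  have A: "((?F \<circ> real_of_ereal) \<longlongrightarrow> 0) (at_right (ereal 0))"
    unfolding ereal_tendsto_simps1 using a by real_asymp
  have B: "((?F \<circ> real_of_ereal) \<longlongrightarrow> X powr a / a) (at_left (ereal X))"
    unfolding ereal_tendsto_simps1
    using X a by (intro tendsto_intros continuous_imp_tendsto) (auto intro!: continuous_intros)
  have "set_integrable lborel (einterval (ereal 0) (ereal X)) (\<lambda>t. t powr (a-1))"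
       "(LBINT t=ereal 0..ereal X. t powr (a-1)) = X powr a / a - 0"
    by (rule interval_integral_FTC_nonneg[OF _ D C _ A B]; use X in auto)+
  then show "set_integrable lborel {0<..<X} (\<lambda>t. t powr (a-1))"
    and "(LBINT t=ereal 0..ereal X. t powr (a-1)) = X powr a / a" by auto
qed

lemma ln_int:
  fixes X :: real assumes X: "X>0"
  shows "set_integrable lborel {0<..<X} (\<lambda>t. - ln (t / X))"
    and "(LBINT t=ereal 0..ereal X. - ln (t / X)) = X"
proof -
  let ?F = "\<lambda>t::real. t - t * ln (t / X)"
  have D: "DERIV ?F x :> - ln (x / X)" if "ereal 0 < ereal x" "ereal x < ereal X" for x
  proof -
    have x: "x > 0" using that by simp
    have "DERIV ?F x :> 1 - (1 * ln (x / X) + x * ((1 / X) / (x / X)))"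
      using x X by (intro derivative_eq_intros) auto
    then show ?thesis using x X by simp
  qed
  have C: "isCont (\<lambda>t. - ln (t / X)) x" if "ereal 0 < ereal x" "ereal x < ereal X" for x
    using that X by (auto intro!: continuous_intros)
  have A: "((?F \<circ> real_of_ereal) \<longlongrightarrow> 0) (at_right (ereal 0))"
    unfolding ereal_tendsto_simps1 using X by real_asymp
  have B: "((?F \<circ> real_of_ereal) \<longlongrightarrow> X) (at_left (ereal X))"
  proof -
    have "isCont ?F X" using X by (auto intro!: continuous_intros)
    then have "(?F \<longlongrightarrow> ?F X) (at_left X)"
      by (simp add: isCont_def filterlim_at_split)
    then show ?thesis unfolding ereal_tendsto_simps1 using X by simp
  qed
  have N: "AE x in lborel. ereal 0 < ereal x \<longrightarrow> ereal x < ereal X \<longrightarrow> 0 \<le> - ln (x / X)"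
    using X by (intro AE_I2) (auto simp: ln_le_zero_iff)
  have "set_integrable lborel (einterval (ereal 0) (ereal X)) (\<lambda>t. - ln (t / X))"
       "(LBINT t=ereal 0..ereal X. - ln (t / X)) = X - 0"
    by (rule interval_integral_FTC_nonneg[OF _ D C N A B]; use X in auto)+
  then show "set_integrable lborel {0<..<X} (\<lambda>t. - ln (t / X))"
    and "(LBINT t=ereal 0..ereal X. - ln (t / X)) = X" by auto
qed



lemma cont_int:
  fixes h :: "real \<Rightarrow> real" assumes "continuous_on {0..X} h"
  shows "set_integrable lborel {0<..<X} h"
  by (rule set_integrable_subset[OF borel_integrable_atLeastAtMost'[OF assms]]) auto

lemma hinv_eq:
  assumes "X > 0"
  shows "hinv \<mu> \<nu> g X = (LINT t:{0<..<X}|lborel. \<bar>t\<bar> powr (\<nu> - 1) * (t\<^sup>2 + 1) powr ((\<mu> - \<nu>) / 2) * exp (g t))"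
  using assms unfolding hinv_def by (subst interval_integral_Ioo) auto

lemma avg_eq:
  assumes "X > 0"
  shows "avg0 g X = (LINT t:{0<..<X}|lborel. g t) / X"
  using assms unfolding avg0_def by (subst interval_integral_Ioo) auto

lemma powr_int':
  fixes a X :: real assumes a: "a>0" and X: "X>0"
  shows "(LINT t:{0<..<X}|lborel. t powr (a-1)) = X powr a / a"
  using powr_int(2)[OF a X] X by (subst (asm) interval_integral_Ioo) auto

lemma ln_int':
  fixes X :: real assumes X: "X>0"
  shows "(LINT t:{0<..<X}|lborel. - ln (t / X)) = X"
  using ln_int(2)[OF X] X by (subst (asm) interval_integral_Ioo) auto

lemma f_integrable:
  fixes g :: "real \<Rightarrow> real" and S X \<mu> \<nu> :: real
  assumes cg: "continuous_on UNIV g" and bnd: "\<And>t. \<bar>g t\<bar> \<le> S" and X: "X > 0" and nu: "0 < \<nu>"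
    and mn: "\<nu> \<le> \<mu>"
  shows "set_integrable lborel {0<..<X} (\<lambda>t. \<bar>t\<bar> powr (\<nu> - 1) * (t\<^sup>2 + 1) powr ((\<mu> - \<nu>) / 2) * exp (g t))"
proof -
  let ?M = "(X\<^sup>2 + 1) powr ((\<mu> - \<nu>) / 2) * exp S"
  have gm: "g \<in> borel_measurable borel" using cg by (rule borel_measurable_continuous_onI)
  have i1: "set_integrable lborel {0<..<X} (\<lambda>t. ?M * t powr (\<nu> - 1))"
    using powr_int(1)[OF nu X] by auto
  show ?thesis
  proof (rule set_integrable_bound[OF i1])
    show "set_borel_measurable lborel {0<..<X} (\<lambda>t. \<bar>t\<bar> powr (\<nu> - 1) * (t\<^sup>2 + 1) powr ((\<mu> - \<nu>) / 2) * exp (g t))"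
      unfolding set_borel_measurable_def using gm by measurable
    show "AE x in lborel. x \<in> {0<..<X} \<longrightarrow> norm (\<bar>x\<bar> powr (\<nu> - 1) * (x\<^sup>2 + 1) powr ((\<mu> - \<nu>) / 2) * exp (g x)) \<le> norm (?M * x powr (\<nu> - 1))"
    proof (intro AE_I2 impI)
      fix x assume x: "x \<in> {0<..<X}"
      have a: "(x\<^sup>2 + 1) powr ((\<mu> - \<nu>) / 2) \<le> (X\<^sup>2 + 1) powr ((\<mu> - \<nu>) / 2)"
        using x mn by (intro powr_mono2) (auto intro!: power_mono)
      have b: "exp (g x) \<le> exp S" using bnd[of x] by simp
      have "\<bar>x\<bar> powr (\<nu> - 1) * (x\<^sup>2 + 1) powr ((\<mu> - \<nu>) / 2) * exp (g x)
            \<le> x powr (\<nu> - 1) * ((X\<^sup>2 + 1) powr ((\<mu> - \<nu>) / 2) * exp S)"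
        using x a b by (simp add: mult.assoc mult_mono)
      then show "norm (\<bar>x\<bar> powr (\<nu> - 1) * (x\<^sup>2 + 1) powr ((\<mu> - \<nu>) / 2) * exp (g x)) \<le> norm (?M * x powr (\<nu> - 1))"
        by (simp add: mult_ac)
    qed
  qed
qed



lemma core1_upper:
  fixes g :: "real \<Rightarrow> real" and S X \<mu> \<nu> :: real
  assumes cg: "continuous_on UNIV g" and bnd: "\<And>t. \<bar>g t\<bar> \<le> S" and X: "X > 0" and nu: "0 < \<nu>"
    and mn: "\<nu> \<le> \<mu>"
  shows "hinv \<mu> \<nu> g X \<le> (1/\<nu>) * X powr \<nu> * (X\<^sup>2 + 1) powr ((\<mu> - \<nu>) / 2) * exp S"
proof -
  let ?M = "(X\<^sup>2 + 1) powr ((\<mu> - \<nu>) / 2) * exp S"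
  have i1: "set_integrable lborel {0<..<X} (\<lambda>t. ?M * t powr (\<nu> - 1))"
    using powr_int(1)[OF nu X] by auto
  have "hinv \<mu> \<nu> g X \<le> (LINT t:{0<..<X}|lborel. ?M * t powr (\<nu> - 1))"
    unfolding hinv_eq[OF X]
  proof (rule set_integral_mono[OF f_integrable[OF cg bnd X nu mn] i1])
    fix x :: real assume x: "x \<in> {0<..<X}"
    have a: "(x\<^sup>2 + 1) powr ((\<mu> - \<nu>) / 2) \<le> (X\<^sup>2 + 1) powr ((\<mu> - \<nu>) / 2)"
      using x mn by (intro powr_mono2) (auto intro!: power_mono)
    have b: "exp (g x) \<le> exp S" using bnd[of x] by simp
    have "\<bar>x\<bar> powr (\<nu> - 1) * (x\<^sup>2 + 1) powr ((\<mu> - \<nu>) / 2) * exp (g x)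
          \<le> x powr (\<nu> - 1) * ((X\<^sup>2 + 1) powr ((\<mu> - \<nu>) / 2) * exp S)"
      using x a b by (simp add: mult.assoc mult_mono)
    then show "\<bar>x\<bar> powr (\<nu> - 1) * (x\<^sup>2 + 1) powr ((\<mu> - \<nu>) / 2) * exp (g x) \<le> ?M * x powr (\<nu> - 1)"
      by (simp add: mult_ac)
  qed
  also have "\<dots> = ?M * (X powr \<nu> / \<nu>)" using powr_int'[OF nu X] by simp
  finally show ?thesis by (simp add: field_simps)
qed

lemma key_ineq:
  fixes t X c :: real assumes t: "0 < t" "t \<le> X" and c: "c \<ge> 0"
  shows "c * (ln (X\<^sup>2 + 1) - 2 * ln X) \<le> c * (ln (t\<^sup>2 + 1) - 2 * ln t)"
proof -
  have "(X\<^sup>2 + 1) / X\<^sup>2 \<le> (t\<^sup>2 + 1) / t\<^sup>2"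
  proof -
    have "(X\<^sup>2 + 1) / X\<^sup>2 = 1 + 1 / X\<^sup>2" "(t\<^sup>2 + 1) / t\<^sup>2 = 1 + 1 / t\<^sup>2" using t by (auto simp: field_simps)
    moreover have "1 / X\<^sup>2 \<le> 1 / t\<^sup>2" using t by (intro divide_left_mono power_mono) auto
    ultimately show ?thesis by simp
  qed
  moreover have "0 < (X\<^sup>2 + 1) / X\<^sup>2" "0 < (t\<^sup>2 + 1) / t\<^sup>2" using t
    by (intro divide_pos_pos; simp add: add_pos_nonneg)+
  ultimately have "ln ((X\<^sup>2 + 1) / X\<^sup>2) \<le> ln ((t\<^sup>2 + 1) / t\<^sup>2)" by simp
  moreover have "ln ((X\<^sup>2 + 1) / X\<^sup>2) = ln (X\<^sup>2 + 1) - 2 * ln X"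
  proof -
    have n1: "X\<^sup>2 \<noteq> 0" using t by auto
    have n2: "X\<^sup>2 + 1 \<noteq> 0" using zero_le_power2[of X] by linarith
    show ?thesis using n1 n2 t ln_div[of "X\<^sup>2 + 1" "X\<^sup>2"] ln_realpow[of X 2] by simp
  qed
  moreover have "ln ((t\<^sup>2 + 1) / t\<^sup>2) = ln (t\<^sup>2 + 1) - 2 * ln t"
  proof -
    have n1: "t\<^sup>2 \<noteq> 0" using t by auto
    have n2: "t\<^sup>2 + 1 \<noteq> 0" using zero_le_power2[of t] by linarith
    show ?thesis using n1 n2 t ln_div[of "t\<^sup>2 + 1" "t\<^sup>2"] ln_realpow[of t 2] by simp
  qed
  ultimately have "ln (X\<^sup>2 + 1) - 2 * ln X \<le> ln (t\<^sup>2 + 1) - 2 * ln t"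
    by simp
  then show ?thesis using c by (rule mult_left_mono)
qed

lemma core1_lower:
  fixes g :: "real \<Rightarrow> real" and S X \<mu> \<nu> :: real
  assumes cg: "continuous_on UNIV g" and bnd: "\<And>t. \<bar>g t\<bar> \<le> S" and X: "X > 0" and nu: "0 < \<nu>"
    and mn: "\<nu> \<le> \<mu>"
  shows "exp (-(\<mu> - 1)) * X powr \<nu> * (X\<^sup>2 + 1) powr ((\<mu> - \<nu>) / 2) * exp (avg0 g X) \<le> hinv \<mu> \<nu> g X"
proof -
  define c where "c = (\<mu> - \<nu>) / 2"
  define K where "K = (\<nu> - 1) * ln X + c * ln (X\<^sup>2 + 1)"
  define a where "a = avg0 g X"
  define C where "C = exp (K + 1 - \<mu> + a)"
  have c0: "c \<ge> 0" using mn by (simp add: c_def)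
  have Cpos: "C > 0" by (simp add: C_def)
  have lnC: "ln C = K + 1 - \<mu> + a" by (simp add: C_def)
  have gI: "set_integrable lborel {0<..<X} g"
    by (rule cont_int) (rule continuous_on_subset[OF cg], auto)
  have cI: "set_integrable lborel {0<..<X} (\<lambda>t. C * (1 + K - ln C))"
    by (rule cont_int) auto
  have lI: "set_integrable lborel {0<..<X} (\<lambda>t. C * (1 - \<mu>) * - ln (t / X))"
    by (rule set_integrable_mult_right) (rule ln_int(1)[OF X])
  have gI': "set_integrable lborel {0<..<X} (\<lambda>t. C * g t)"
    using gI by auto
  let ?R = "\<lambda>t. C * (1 + K - ln C) + C * (1 - \<mu>) * - ln (t / X) + C * g t"
  have RI: "set_integrable lborel {0<..<X} ?R"
    using cI lI gI' by (intro set_integral_add) auto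
  have meas: "measure lborel {0<..<X} = X" using X by simp
  have intR: "(LINT t:{0<..<X}|lborel. ?R t) = C * X"
  proof -
    have e0: "(LINT t:{0<..<X}|lborel. ?R t) = (LINT t:{0<..<X}|lborel. C * (1 + K - ln C))
       + (LINT t:{0<..<X}|lborel. C * (1 - \<mu>) * - ln (t / X)) + (LINT t:{0<..<X}|lborel. C * g t)"
      by (simp only: set_integral_add(2)[OF set_integral_add(1)[OF cI lI] gI'] set_integral_add(2)[OF cI lI])
    have e1: "(LINT t:{0<..<X}|lborel. C * (1 + K - ln C)) = X * (C * (1 + K - ln C))"
      using meas set_integral_const[of "{0<..<X}" lborel "C * (1 + K - ln C)"] X by simp
    have e2: "(LINT t:{0<..<X}|lborel. C * (1 - \<mu>) * - ln (t / X)) = C * (1 - \<mu>) * X"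
      using ln_int'[OF X] by (simp only: set_integral_mult_right)
    have e3: "(LINT t:{0<..<X}|lborel. C * g t) = C * (X * a)"
    proof -
      have "(LINT t:{0<..<X}|lborel. g t) = X * a" using avg_eq[OF X, of g] X by (simp add: a_def)
      then show ?thesis by (simp only: set_integral_mult_right)
    qed
    show ?thesis unfolding e0 e1 e2 e3 by (simp add: lnC algebra_simps)
  qed
  have "(LINT t:{0<..<X}|lborel. ?R t) \<le> hinv \<mu> \<nu> g X"
    unfolding hinv_eq[OF X]
  proof (rule set_integral_mono[OF RI f_integrable[OF cg bnd X nu mn]])
    fix t :: real assume t: "t \<in> {0<..<X}"
    then have t0: "t > 0" "t \<le> X" by auto
    have f_eq: "\<bar>t\<bar> powr (\<nu> - 1) * (t\<^sup>2 + 1) powr ((\<mu> - \<nu>) / 2) * exp (g t)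
        = exp ((\<nu> - 1) * ln t + c * ln (t\<^sup>2 + 1) + g t)"
      using t0 zero_le_power2[of t] by (simp add: powr_def exp_add c_def mult_ac add_nonneg_eq_0_iff)
    have ki: "c * (ln (X\<^sup>2 + 1) - 2 * ln X) \<le> c * (ln (t\<^sup>2 + 1) - 2 * ln t)"
      by (rule key_ineq[OF t0 c0])
    have lnt: "ln (t / X) = ln t - ln X" using t0 X by (simp add: ln_div)
    define y where "y = K + (\<mu> - 1) * ln (t / X) + g t"
    have yle: "y \<le> (\<nu> - 1) * ln t + c * ln (t\<^sup>2 + 1) + g t"
    proof -
      have mc: "\<mu> - 1 = (\<nu> - 1) + 2 * c" by (simp add: c_def field_simps)
      show ?thesis using ki unfolding y_def K_def lnt mc by (simp add: algebra_simps)
    qed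
    have "C * (1 + (y - ln C)) \<le> C * exp (y - ln C)"
      using Cpos by (intro mult_left_mono exp_ge_add_one_self) auto
    also have "\<dots> = exp y" using Cpos by (simp add: exp_diff)
    also have "\<dots> \<le> exp ((\<nu> - 1) * ln t + c * ln (t\<^sup>2 + 1) + g t)" using yle by simp
    finally have "C * (1 + (y - ln C)) \<le> \<bar>t\<bar> powr (\<nu> - 1) * (t\<^sup>2 + 1) powr ((\<mu> - \<nu>) / 2) * exp (g t)"
      using f_eq by simp
    then show "?R t \<le> \<bar>t\<bar> powr (\<nu> - 1) * (t\<^sup>2 + 1) powr ((\<mu> - \<nu>) / 2) * exp (g t)"
      unfolding y_def by (simp add: algebra_simps)
  qed
  moreover have "C * X = exp (-(\<mu> - 1)) * X powr \<nu> * (X\<^sup>2 + 1) powr ((\<mu> - \<nu>) / 2) * exp (avg0 g X)"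
  proof -
    have "X powr \<nu> = X * exp ((\<nu> - 1) * ln X)" using X
      by (simp add: powr_def exp_diff algebra_simps)
    moreover have "(X\<^sup>2 + 1) powr ((\<mu> - \<nu>) / 2) = exp (c * ln (X\<^sup>2 + 1))"
      using zero_le_power2[of X] by (simp add: powr_def c_def mult_ac add_nonneg_eq_0_iff)
    ultimately show ?thesis unfolding C_def K_def a_def
      by (simp add: exp_add exp_diff exp_minus field_simps)
  qed
  ultimately show ?thesis using intR by simp
qed



lemma f_eq_G:
  fixes t :: real assumes "t > 0"
  shows "\<bar>t\<bar> powr (\<nu> - 1) * (t\<^sup>2 + 1) powr ((\<mu> - \<nu>) / 2) * exp (g t)
        = exp ((\<nu> - 1) * ln t + bigG \<mu> \<nu> g t)"
  using assms zero_le_power2[of t]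
  by (simp add: powr_def exp_add bigG_def mult_ac add_nonneg_eq_0_iff)

lemma G_eq:
  fixes X :: real
  shows "(X\<^sup>2 + 1) powr ((\<mu> - \<nu>) / 2) * exp (g X) = exp (bigG \<mu> \<nu> g X)"
  using zero_le_power2[of X]
  by (simp add: powr_def exp_add bigG_def mult_ac add_nonneg_eq_0_iff)

lemma core2:
  fixes g :: "real \<Rightarrow> real" and S X \<mu> \<nu> :: real
  assumes cg: "continuous_on UNIV g" and bnd: "\<And>t. \<bar>g t\<bar> \<le> S" and X: "X > 0" and nu: "0 < \<nu>"
    and mn: "\<nu> \<le> \<mu>"
    and mono: "\<And>t. 0 < t \<Longrightarrow> t \<le> X \<Longrightarrow> bigG \<mu> \<nu> g t \<le> bigG \<mu> \<nu> g X"
    and ub: "\<And>t. 0 < t \<Longrightarrow> t \<le> X \<Longrightarrow> bigG \<mu> \<nu> g X - bigG \<mu> \<nu> g t \<le> (\<mu> - \<nu>) * (ln (X / t) + 2)"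
  shows "exp (1 - \<nu> - 6 * (\<mu> - \<nu>)) * \<bar>X\<bar> powr (\<nu> - 1) * (X\<^sup>2 + 1) powr ((\<mu> - \<nu>) / 2) * exp (g X)
              \<le> hinv \<mu> \<nu> g X / X"
    and "hinv \<mu> \<nu> g X / X
              \<le> (1/\<nu>) * \<bar>X\<bar> powr (\<nu> - 1) * (X\<^sup>2 + 1) powr ((\<mu> - \<nu>) / 2) * exp (g X)"
proof -
  have mu: "\<mu> > 0" using nu mn by simp
  let ?G = "bigG \<mu> \<nu> g"
  have fI: "set_integrable lborel {0<..<X} (\<lambda>t. \<bar>t\<bar> powr (\<nu> - 1) * (t\<^sup>2 + 1) powr ((\<mu> - \<nu>) / 2) * exp (g t))"
    by (rule f_integrable[OF cg bnd X nu mn])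
  have pX: "\<And>a. X powr a = exp (a * ln X)" using X by (simp add: powr_def)
  have aX: "\<bar>X\<bar> = X" using X by simp
  have Xe: "X = exp (ln X)" using X by simp
  have i1: "set_integrable lborel {0<..<X} (\<lambda>t. exp (?G X) * t powr (\<nu> - 1))"
    using powr_int(1)[OF nu X] by auto
  have "hinv \<mu> \<nu> g X \<le> (LINT t:{0<..<X}|lborel. exp (?G X) * t powr (\<nu> - 1))"
    unfolding hinv_eq[OF X]
  proof (rule set_integral_mono[OF fI i1])
    fix t :: real assume t: "t \<in> {0<..<X}"
    have "exp ((\<nu> - 1) * ln t + ?G t) \<le> exp ((\<nu> - 1) * ln t + ?G X)"
      using mono[of t] t by simp
    also have "\<dots> = exp (?G X) * t powr (\<nu> - 1)" using t by (simp add: powr_def exp_add)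
    finally show "\<bar>t\<bar> powr (\<nu> - 1) * (t\<^sup>2 + 1) powr ((\<mu> - \<nu>) / 2) * exp (g t) \<le> exp (?G X) * t powr (\<nu> - 1)"
      using f_eq_G[of t] t by simp
  qed
  also have "\<dots> = exp (?G X) * (X powr \<nu> / \<nu>)" using powr_int'[OF nu X] by simp
  finally have up: "hinv \<mu> \<nu> g X \<le> exp (?G X) * (X powr \<nu> / \<nu>)" .
  show "hinv \<mu> \<nu> g X / X
              \<le> (1/\<nu>) * \<bar>X\<bar> powr (\<nu> - 1) * (X\<^sup>2 + 1) powr ((\<mu> - \<nu>) / 2) * exp (g X)"
  proof -
    have "hinv \<mu> \<nu> g X / X \<le> exp (?G X) * (X powr \<nu> / \<nu>) / X"
      by (rule divide_right_mono[OF up]) (use X in simp)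
    also have "\<dots> = (1/\<nu>) * \<bar>X\<bar> powr (\<nu> - 1) * (X\<^sup>2 + 1) powr ((\<mu> - \<nu>) / 2) * exp (g X)"
      unfolding aX mult.assoc G_eq pX
      by (subst (2) Xe) (simp add: exp_diff[symmetric] exp_add[symmetric] algebra_simps divide_simps)
    finally show ?thesis .
  qed
  define E where "E = ?G X - (\<mu> - \<nu>) * ln X - 2 * (\<mu> - \<nu>)"
  have i2: "set_integrable lborel {0<..<X} (\<lambda>t. exp E * t powr (\<mu> - 1))"
    using powr_int(1)[OF mu X] by auto
  have "(LINT t:{0<..<X}|lborel. exp E * t powr (\<mu> - 1)) \<le> hinv \<mu> \<nu> g X"
    unfolding hinv_eq[OF X]
  proof (rule set_integral_mono[OF i2 fI])
    fix t :: real assume t: "t \<in> {0<..<X}"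
    have lnt: "ln (X / t) = ln X - ln t" using t X by (simp add: ln_div)
    have "(\<mu> - 1) * ln t + E \<le> (\<nu> - 1) * ln t + ?G t"
      using ub[of t] t unfolding E_def lnt by (simp add: algebra_simps)
    then have "exp E * t powr (\<mu> - 1) \<le> exp ((\<nu> - 1) * ln t + ?G t)"
      using t by (simp add: powr_def exp_add[symmetric] add.commute)
    then show "exp E * t powr (\<mu> - 1) \<le> \<bar>t\<bar> powr (\<nu> - 1) * (t\<^sup>2 + 1) powr ((\<mu> - \<nu>) / 2) * exp (g t)"
      using f_eq_G[of t] t by simp
  qed
  moreover have "(LINT t:{0<..<X}|lborel. exp E * t powr (\<mu> - 1)) = exp E * (X powr \<mu> / \<mu>)"
    using powr_int'[OF mu X] by simp
  ultimately have lo: "exp E * (X powr \<mu> / \<mu>) \<le> hinv \<mu> \<nu> g X" by simp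
  show "exp (1 - \<nu> - 6 * (\<mu> - \<nu>)) * \<bar>X\<bar> powr (\<nu> - 1) * (X\<^sup>2 + 1) powr ((\<mu> - \<nu>) / 2) * exp (g X)
              \<le> hinv \<mu> \<nu> g X / X"
  proof -
    define Q where "Q = exp (?G X + (\<nu> - 1) * ln X)"
    have Q0: "Q > 0" by (simp add: Q_def)
    have lhs: "exp (1 - \<nu> - 6 * (\<mu> - \<nu>)) * \<bar>X\<bar> powr (\<nu> - 1) * (X\<^sup>2 + 1) powr ((\<mu> - \<nu>) / 2) * exp (g X)
        = exp (1 - \<nu> - 6 * (\<mu> - \<nu>)) * Q"
      unfolding aX mult.assoc G_eq pX Q_def by (simp add: exp_add[symmetric] algebra_simps)
    have rhs: "exp E * (X powr \<mu> / \<mu>) / X = exp (- 2 * (\<mu> - \<nu>)) * Q / \<mu>"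
      unfolding pX Q_def E_def
      using X by (simp add: exp_diff exp_add field_simps)
    have "\<mu> \<le> 1 + (4 * \<mu> - 3 * \<nu> - 1)" using mn by simp
    also have "\<dots> \<le> exp (4 * \<mu> - 3 * \<nu> - 1)" by (rule exp_ge_add_one_self)
    finally have m1: "\<mu> \<le> exp (4 * \<mu> - 3 * \<nu> - 1)" .
    have "exp (1 - \<nu> - 6 * (\<mu> - \<nu>)) * \<mu> \<le> exp (1 - \<nu> - 6 * (\<mu> - \<nu>)) * exp (4 * \<mu> - 3 * \<nu> - 1)"
      using m1 by simp
    also have "\<dots> = exp (- 2 * (\<mu> - \<nu>))" by (simp add: exp_add[symmetric] algebra_simps)
    finally have k: "exp (1 - \<nu> - 6 * (\<mu> - \<nu>)) * \<mu> \<le> exp (- 2 * (\<mu> - \<nu>))" .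
    have "exp (1 - \<nu> - 6 * (\<mu> - \<nu>)) * Q \<le> exp (- 2 * (\<mu> - \<nu>)) * Q / \<mu>"
      using k Q0 mu by (simp add: field_simps)
    also have "\<dots> = exp E * (X powr \<mu> / \<mu>) / X" using rhs by simp
    also have "\<dots> \<le> hinv \<mu> \<nu> g X / X" by (rule divide_right_mono[OF lo]) (use X in simp)
    finally show ?thesis unfolding lhs .
  qed
qed



lemma hinv_reflect: "hinv \<mu> \<nu> g x = - hinv \<mu> \<nu> (\<lambda>t. g (-t)) (-x)"
proof -
  have "hinv \<mu> \<nu> g x = (LBINT t=ereal (-x)..ereal 0.
      \<bar>-t\<bar> powr (\<nu> - 1) * ((-t)\<^sup>2 + 1) powr ((\<mu> - \<nu>) / 2) * exp (g (-t)))"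
    unfolding hinv_def by (subst interval_integral_reflect) simp
  also have "\<dots> = - hinv \<mu> \<nu> (\<lambda>t. g (-t)) (-x)"
    unfolding hinv_def by (subst interval_integral_endpoints_reverse) simp
  finally show ?thesis .
qed

lemma avg_reflect: assumes "x \<noteq> 0" shows "avg0 g x = avg0 (\<lambda>t. g (-t)) (-x)"
proof -
  have "(LBINT t=ereal 0..ereal x. g t) = (LBINT t=ereal (-x)..ereal 0. g (-t))"
    by (subst interval_integral_reflect) simp
  also have "\<dots> = - (LBINT t=ereal 0..ereal (-x). g (-t))"
    by (subst interval_integral_endpoints_reverse) simp
  finally show ?thesis using assms unfolding avg0_def by simp
qed

lemma avg_ge:
  fixes g :: "real \<Rightarrow> real"
  assumes cg: "continuous_on UNIV g" and bnd: "\<And>t. \<bar>g t\<bar> \<le> S" and X: "X > 0"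
  shows "- S \<le> avg0 g X"
proof -
  have gI: "set_integrable lborel {0<..<X} g"
    by (rule cont_int) (rule continuous_on_subset[OF cg], auto)
  have cI: "set_integrable lborel {0<..<X} (\<lambda>t. - S)" by (rule cont_int) auto
  have "(LINT t:{0<..<X}|lborel. - S) \<le> (LINT t:{0<..<X}|lborel. g t)"
    by (rule set_integral_mono[OF cI gI]) (metis abs_le_iff bnd minus_le_iff)
  moreover have "(LINT t:{0<..<X}|lborel. - S) = X * (- S)"
    using set_integral_const[of "{0<..<X}" lborel "- S"] X by simp
  ultimately have "X * (- S) \<le> (LINT t:{0<..<X}|lborel. g t)" by simp
  then show ?thesis unfolding avg_eq[OF X] using X by (simp add: field_simps)
qed

lemma spaceX_bnd:
  assumes "g \<in> spaceX" shows "\<bar>g t\<bar> \<le> supnorm g"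
proof -
  from assms have "bounded (range g)" by (simp add: spaceX_def)
  then obtain B where B: "\<And>x. \<bar>g x\<bar> \<le> B" unfolding bounded_iff by auto
  have "bdd_above (range (\<lambda>x. \<bar>g x\<bar>))" using B by (intro bdd_aboveI2) 
  then show ?thesis unfolding supnorm_def by (rule cSUP_upper[rotated]) simp
qed

lemma part1_pos:
  fixes g :: "real \<Rightarrow> real" and S X \<mu> \<nu> :: real
  assumes cg: "continuous_on UNIV g" and bnd: "\<And>t. \<bar>g t\<bar> \<le> S" and X: "X > 0" and nu: "0 < \<nu>"
    and mn: "\<nu> \<le> \<mu>"
  shows "\<bar>hinv \<mu> \<nu> g X\<bar> \<le> (1/\<nu>) * X powr \<nu> * (X\<^sup>2 + 1) powr ((\<mu> - \<nu>) / 2) * exp S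
     \<and> \<bar>hinv \<mu> \<nu> g X\<bar> \<ge> exp (-(\<mu> - 1)) * X powr \<nu> * (X\<^sup>2 + 1) powr ((\<mu> - \<nu>) / 2) * exp (avg0 g X)
     \<and> avg0 g X \<ge> - S"
proof -
  have lo: "exp (-(\<mu> - 1)) * X powr \<nu> * (X\<^sup>2 + 1) powr ((\<mu> - \<nu>) / 2) * exp (avg0 g X) \<le> hinv \<mu> \<nu> g X"
    by (rule core1_lower[OF cg bnd X nu mn])
  have "0 \<le> exp (-(\<mu> - 1)) * X powr \<nu> * (X\<^sup>2 + 1) powr ((\<mu> - \<nu>) / 2) * exp (avg0 g X)"
    by simp
  then have "\<bar>hinv \<mu> \<nu> g X\<bar> = hinv \<mu> \<nu> g X" using lo by linarith
  then show ?thesis using lo core1_upper[OF cg bnd X nu mn] avg_ge[OF cg bnd X] by simp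
qed



theorem lemma5p2:
  fixes \<mu> \<nu> :: real
  assumes "\<mu> > 1/2" and "0 < \<nu>" and "\<nu> < 1/2"
  shows "(\<forall>g \<in> spaceX. \<forall>x::real.
            \<bar>hinv \<mu> \<nu> g x\<bar> \<le> (1/\<nu>) * \<bar>x\<bar> powr \<nu> * (x\<^sup>2 + 1) powr ((\<mu> - \<nu>) / 2) * exp (supnorm g)
          \<and> \<bar>hinv \<mu> \<nu> g x\<bar> \<ge> exp (-(\<mu> - 1)) * \<bar>x\<bar> powr \<nu> * (x\<^sup>2 + 1) powr ((\<mu> - \<nu>) / 2) * exp (avg0 g x)
          \<and> exp (-(\<mu> - 1)) * \<bar>x\<bar> powr \<nu> * (x\<^sup>2 + 1) powr ((\<mu> - \<nu>) / 2) * exp (avg0 g x)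
              \<ge> exp (-(\<mu> - 1)) * \<bar>x\<bar> powr \<nu> * (x\<^sup>2 + 1) powr ((\<mu> - \<nu>) / 2) * exp (- supnorm g))
       \<and> (\<forall>g \<in> spaceX1 \<mu> \<nu>. \<forall>x::real. x \<noteq> 0 \<longrightarrow>
            exp (1 - \<nu> - 6 * (\<mu> - \<nu>)) * \<bar>x\<bar> powr (\<nu> - 1) * (x\<^sup>2 + 1) powr ((\<mu> - \<nu>) / 2) * exp (g x)
              \<le> hinv \<mu> \<nu> g x / x
          \<and> hinv \<mu> \<nu> g x / x
              \<le> (1/\<nu>) * \<bar>x\<bar> powr (\<nu> - 1) * (x\<^sup>2 + 1) powr ((\<mu> - \<nu>) / 2) * exp (g x))"
proof (intro conjI ballI allI impI)
  have nu: "0 < \<nu>" and mn: "\<nu> \<le> \<mu>" using assms by auto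
  {
    fix g and x :: real assume g: "g \<in> spaceX"
    let ?S = "supnorm g"
    have cg: "continuous_on UNIV g" using g by (simp add: spaceX_def)
    have bnd: "\<And>t. \<bar>g t\<bar> \<le> ?S" using spaceX_bnd[OF g] .
    have cg': "continuous_on UNIV (\<lambda>t. g (- t))"
      by (rule continuous_on_compose2[OF cg]) (auto intro!: continuous_intros)
    have bnd': "\<And>t. \<bar>g (- t)\<bar> \<le> ?S" using bnd .
    have P: "\<bar>hinv \<mu> \<nu> g x\<bar> \<le> (1/\<nu>) * \<bar>x\<bar> powr \<nu> * (x\<^sup>2 + 1) powr ((\<mu> - \<nu>) / 2) * exp ?S
     \<and> \<bar>hinv \<mu> \<nu> g x\<bar> \<ge> exp (-(\<mu> - 1)) * \<bar>x\<bar> powr \<nu> * (x\<^sup>2 + 1) powr ((\<mu> - \<nu>) / 2) * exp (avg0 g x)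
     \<and> avg0 g x \<ge> - ?S"
    proof (cases x "0::real" rule: linorder_cases)
      case less
      have X: "-x > 0" using less by simp
      have "hinv \<mu> \<nu> g x = - hinv \<mu> \<nu> (\<lambda>t. g (- t)) (-x)" by (rule hinv_reflect)
      moreover have "avg0 g x = avg0 (\<lambda>t. g (- t)) (-x)" using less by (intro avg_reflect) simp
      moreover have "\<bar>x\<bar> = -x" using less by simp
      moreover have "x\<^sup>2 = (-x)\<^sup>2" by simp
      ultimately show ?thesis using part1_pos[OF cg' bnd' X nu mn]
        by (simp only: abs_minus_cancel)
    next
      case equal
      then show ?thesis using bnd[of 0] by (simp add: hinv_def avg0_def)
    next
      case greater
      then show ?thesis using part1_pos[OF cg bnd greater nu mn] by simp
    qed
    then show "\<bar>hinv \<mu> \<nu> g x\<bar> \<le> (1/\<nu>) * \<bar>x\<bar> powr \<nu> * (x\<^sup>2 + 1) powr ((\<mu> - \<nu>) / 2) * exp ?S"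
      and "\<bar>hinv \<mu> \<nu> g x\<bar> \<ge> exp (-(\<mu> - 1)) * \<bar>x\<bar> powr \<nu> * (x\<^sup>2 + 1) powr ((\<mu> - \<nu>) / 2) * exp (avg0 g x)"
      by auto
    from P have "exp (- ?S) \<le> exp (avg0 g x)" by simp
    then show "exp (-(\<mu> - 1)) * \<bar>x\<bar> powr \<nu> * (x\<^sup>2 + 1) powr ((\<mu> - \<nu>) / 2) * exp (avg0 g x)
              \<ge> exp (-(\<mu> - 1)) * \<bar>x\<bar> powr \<nu> * (x\<^sup>2 + 1) powr ((\<mu> - \<nu>) / 2) * exp (- ?S)"
      by (intro mult_left_mono) auto
  }
  {
    fix g and x :: real assume g1: "g \<in> spaceX1 \<mu> \<nu>" and x: "x \<noteq> 0"
    have g: "g \<in> spaceX" using g1 by (simp add: spaceX1_def)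
    have cg: "continuous_on UNIV g" using g by (simp add: spaceX_def)
    have bnd: "\<And>t. \<bar>g t\<bar> \<le> supnorm g" using spaceX_bnd[OF g] .
    have ev: "\<And>t. g (- t) = g t"
    proof -
      fix t
      have "bigG \<mu> \<nu> g (-t) = bigG \<mu> \<nu> g t" using g1 by (simp add: spaceX1_def)
      then show "g (- t) = g t" by (simp add: bigG_def)
    qed
    have evf: "(\<lambda>t. g (- t)) = g" using ev by auto
    have mono: "\<And>t X. 0 < t \<Longrightarrow> t \<le> X \<Longrightarrow> bigG \<mu> \<nu> g t \<le> bigG \<mu> \<nu> g X"
      using g1 unfolding spaceX1_def by force
    have ub: "\<And>t X. 0 < t \<Longrightarrow> t \<le> X \<Longrightarrow> bigG \<mu> \<nu> g X - bigG \<mu> \<nu> g t \<le> (\<mu> - \<nu>) * (ln (X / t) + 2)"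
      using g1 unfolding spaceX1_def by blast
    define X :: real where "X = \<bar>x\<bar>"
    have X: "X > 0" using x by (simp add: X_def)
    have eq1: "hinv \<mu> \<nu> g x / x = hinv \<mu> \<nu> g X / X"
    proof (cases "x > 0")
      case True then show ?thesis by (simp add: X_def)
    next
      case False
      then have "X = -x" by (simp add: X_def)
      moreover have "hinv \<mu> \<nu> g x = - hinv \<mu> \<nu> g (-x)" using hinv_reflect[of \<mu> \<nu> g x] evf by simp
      ultimately show ?thesis by simp
    qed
    have eq2: "\<bar>x\<bar> = \<bar>X\<bar>" "x\<^sup>2 = X\<^sup>2" "g x = g X" using ev[of x] by (auto simp: X_def abs_if)
    note C = core2[OF cg bnd X nu mn mono ub]
    show "exp (1 - \<nu> - 6 * (\<mu> - \<nu>)) * \<bar>x\<bar> powr (\<nu> - 1) * (x\<^sup>2 + 1) powr ((\<mu> - \<nu>) / 2) * exp (g x)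
              \<le> hinv \<mu> \<nu> g x / x"
      unfolding eq1 eq2 by (rule C(1))
    show "hinv \<mu> \<nu> g x / x
              \<le> (1/\<nu>) * \<bar>x\<bar> powr (\<nu> - 1) * (x\<^sup>2 + 1) powr ((\<mu> - \<nu>) / 2) * exp (g x)"
      unfolding eq1 eq2 by (rule C(2))
  }
qed

end
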